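(* Let $n_1,n_2,n_3$ be integers with $3\le n_1,n_2\le n_3$, let $W$ be a basic landmark system for $K(\mathbf{n})$, and let $u=(n_1+1,n_2+1,n_3+1)$. Then $W\cup\{u\}$ is a resolving set of $K(\mathbf{n}+\mathbf{1})=K_{n_1+1}\times K_{n_2+1}\times K_{n_3+1}$ if and only if the landmark graph $\mathcal{G}(W)$ contains no bad $4$-cycle, no plain hex, and no rainbow $2$-$2$-triangle.
   Context: $K(\mathbf{n})=K_{n_1}\times K_{n_2}\times K_{n_3}$ is the direct product of complete graphs: vertices are triples $(x_1,x_2,x_3)$, $1\le x_i\le n_i$, adjacent iff they differ in every coordinate. A set $W$ of vertices is resolving if for every two distinct vertices $x,y\notin W$ some $w\in W$ has $d(x,w)\neq d(y,w)$ ($d$ = graph distance). Landmark graph: $W_{i,a}=\{w\in W: w_i=a\}$; $\mathcal{G}(W)$ is the hypergraph on $W$ whose hyperedges are the nonempty $W_{i,a}$, each colored $i$. A stick is a hyperedge with exactly two vertices, poofy if at least three. Basic landmark system for $K(\mathbf{n})$: a vertex set $W$ such that (1) $W_{i,a}\neq\emptyset$ for all $i\in\{1,2,3\}$, $1\le a\le n_i$; (2) $|W_{i,a}|\ge 2$ for all such $i,a$; (3) $|W_{i,a}\cap W_{j,b}|\le 1$ whenever $i\ne j$. Bad $4$-cycle: distinct $w_1,\dots,w_4\in W$ and $\{i,j,k\}=\{1,2,3\}$ such that $\{w_1,w_2\}$, $\{w_3,w_4\}$ are hyperedges of color $i$, $w_2,w_3$ lie in a common hyperedge of color $j$, and $w_4,w_1$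 lie in a common hyperedge of color $k$. Plain hex: distinct $w_1,\dots,w_6\in W$ and an ordering $(i,j,k)$ of $\{1,2,3\}$ with $\{w_1,w_2\},\{w_4,w_5\}$ hyperedges of color $i$, $\{w_2,w_3\},\{w_5,w_6\}$ of color $j$, $\{w_3,w_4\},\{w_6,w_1\}$ of color $k$. Rainbow $2$-$2$-triangle: distinct $w_1,w_2,w_3\in W$ and $\{i,j,k\}=\{1,2,3\}$ with $\{w_1,w_2\}$ a hyperedge of color $i$, $\{w_2,w_3\}$ a hyperedge of color $j$, and $w_1,w_3$ in a common hyperedge of color $k$. *)

theory Defs
  imports Main "HOL-Library.Extended_Nat"
begin

type_synonym vtx = "nat \<times> nat \<times> nat"

definition coord :: "nat \<Rightarrow> vtx \<Rightarrow> nat" where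
  "coord i x = (case x of (x1, x2, x3) \<Rightarrow> if i = 1 then x1 else if i = 2 then x2 else x3)"

definition Kverts :: "nat \<Rightarrow> nat \<Rightarrow> nat \<Rightarrow> vtx set" where
  "Kverts n1 n2 n3 = {(x1, x2, x3). 1 \<le> x1 \<and> x1 \<le> n1 \<and> 1 \<le> x2 \<and> x2 \<le> n2 \<and> 1 \<le> x3 \<and> x3 \<le> n3}"

text \<open>Adjacency in the direct product of complete graphs: differ in every coordinate.\<close>
definition Kadj :: "vtx \<Rightarrow> vtx \<Rightarrow> bool" where
  "Kadj x y \<longleftrightarrow> (\<forall>i\<in>{1,2,3::nat}. coord i x \<noteq> coord i y)"

inductive walk :: "'a set \<Rightarrow> ('a \<Rightarrow> 'a \<Rightarrow> bool) \<Rightarrow> nat \<Rightarrow> 'a \<Rightarrow> 'a \<Rightarrow> bool"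
  for V adj where
  walk0: "x \<in> V \<Longrightarrow> walk V adj 0 x x"
| walkS: "x \<in> V \<Longrightarrow> adj x y \<Longrightarrow> walk V adj k y z \<Longrightarrow> walk V adj (Suc k) x z"

text \<open>Graph distance (infinite if no walk exists).\<close>
definition gdist :: "'a set \<Rightarrow> ('a \<Rightarrow> 'a \<Rightarrow> bool) \<Rightarrow> 'a \<Rightarrow> 'a \<Rightarrow> enat" where
  "gdist V adj x y = Inf {enat k | k. walk V adj k x y}"

definition resolving :: "'a set \<Rightarrow> ('a \<Rightarrow> 'a \<Rightarrow> bool) \<Rightarrow> 'a set \<Rightarrow> bool" where
  "resolving V adj W \<longleftrightarrow> W \<subseteq> V \<and>
     (\<forall>x\<in>V - W. \<forall>y\<in>V - W. x \<noteq> y \<longrightarrow> (\<exists>w\<in>W. gdist V adj x w \<noteq> gdist V adj y w))"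

definition Wset :: "vtx set \<Rightarrow> nat \<Rightarrow> nat \<Rightarrow> vtx set" where
  "Wset W i a = {w \<in> W. coord i w = a}"

definition hyperedge :: "vtx set \<Rightarrow> nat \<Rightarrow> vtx set \<Rightarrow> bool" where
  "hyperedge W i e \<longleftrightarrow> i \<in> {1,2,3} \<and> (\<exists>a. e = Wset W i a \<and> e \<noteq> {})"

definition common :: "vtx set \<Rightarrow> nat \<Rightarrow> vtx \<Rightarrow> vtx \<Rightarrow> bool" where
  "common W i w v \<longleftrightarrow> (\<exists>e. hyperedge W i e \<and> w \<in> e \<and> v \<in> e)"

definition basic_landmark :: "nat \<Rightarrow> nat \<Rightarrow> nat \<Rightarrow> vtx set \<Rightarrow> bool" where
  "basic_landmark n1 n2 n3 W \<longleftrightarrow> W \<subseteq> Kverts n1 n2 n3 \<and>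
     (\<forall>i\<in>{1,2,3}. \<forall>a. 1 \<le> a \<and> a \<le> coord i (n1, n2, n3) \<longrightarrow> Wset W i a \<noteq> {}) \<and>
     (\<forall>i\<in>{1,2,3}. \<forall>a. 1 \<le> a \<and> a \<le> coord i (n1, n2, n3) \<longrightarrow> card (Wset W i a) \<ge> 2) \<and>
     (\<forall>i\<in>{1,2,3}. \<forall>j\<in>{1,2,3}. \<forall>a b. i \<noteq> j \<longrightarrow> card (Wset W i a \<inter> Wset W j b) \<le> 1)"

definition has_bad_4cycle :: "vtx set \<Rightarrow> bool" where
  "has_bad_4cycle W \<longleftrightarrow> (\<exists>w1 w2 w3 w4 i j k.
     w1 \<in> W \<and> w2 \<in> W \<and> w3 \<in> W \<and> w4 \<in> W \<and> distinct [w1, w2, w3, w4] \<and>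
     {i, j, k} = {1, 2, 3} \<and>
     hyperedge W i {w1, w2} \<and> hyperedge W i {w3, w4} \<and>
     common W j w2 w3 \<and> common W k w4 w1)"

definition has_plain_hex :: "vtx set \<Rightarrow> bool" where
  "has_plain_hex W \<longleftrightarrow> (\<exists>w1 w2 w3 w4 w5 w6 i j k.
     w1 \<in> W \<and> w2 \<in> W \<and> w3 \<in> W \<and> w4 \<in> W \<and> w5 \<in> W \<and> w6 \<in> W \<and>
     distinct [w1, w2, w3, w4, w5, w6] \<and>
     {i, j, k} = {1, 2, 3} \<and>
     hyperedge W i {w1, w2} \<and> hyperedge W i {w4, w5} \<and>
     hyperedge W j {w2, w3} \<and> hyperedge W j {w5, w6} \<and>
     hyperedge W k {w3, w4} \<and> hyperedge W k {w6, w1})"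

definition has_rainbow_triangle :: "vtx set \<Rightarrow> bool" where
  "has_rainbow_triangle W \<longleftrightarrow> (\<exists>w1 w2 w3 i j k.
     w1 \<in> W \<and> w2 \<in> W \<and> w3 \<in> W \<and> distinct [w1, w2, w3] \<and>
     {i, j, k} = {1, 2, 3} \<and>
     hyperedge W i {w1, w2} \<and> hyperedge W j {w2, w3} \<and> common W k w1 w3)"

end

theory Submission
  imports Defs
begin


lemma coord_simps[simp]: "coord 1 (a,b,c) = a" "coord 2 (a,b,c) = b" "coord 3 (a,b,c) = c"
  by (simp_all add: coord_def)

lemma coord_Suc0[simp]: "coord (Suc 0) (a,b,c) = a"
  by (simp add: coord_def)

lemma coord_plus1: "coord t (a+1,b+1,c+1) = coord t (a,b,c) + 1"
  by (simp add: coord_def)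

lemma vext: "((x::vtx) = y) \<longleftrightarrow> (\<forall>t\<in>{1,2,3}. coord t x = coord t y)"
  by (cases x; cases y) (auto simp: coord_def)

lemma Kverts_iff: "x \<in> Kverts m1 m2 m3 \<longleftrightarrow> (\<forall>t\<in>{1,2,3}. 1 \<le> coord t x \<and> coord t x \<le> coord t (m1,m2,m3))"
  by (cases x) (auto simp: Kverts_def coord_def)

lemma perm3: assumes "{i,j,k} = {1::nat,2,3}"
  shows "i\<in>{1,2,3}" "j\<in>{1,2,3}" "k\<in>{1,2,3}" "i\<noteq>j" "i\<noteq>k" "j\<noteq>k"
proof -
  have c: "card {i,j,k} = 3" using assms by simp
  show "i\<in>{1,2,3}" "j\<in>{1,2,3}" "k\<in>{1,2,3}" using assms by blast+
  show "i\<noteq>j" "i\<noteq>k" "j\<noteq>k" using c by (auto simp: card_insert_if split: if_splits)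
qed

definition mk3 :: "nat\<Rightarrow>nat\<Rightarrow>nat\<Rightarrow>nat\<Rightarrow>nat\<Rightarrow>nat\<Rightarrow>vtx" where
  "mk3 i j k a b c = (let f = (\<lambda>t. if t = i then a else if t = j then b else c) in (f 1, f 2, f 3))"

lemma coord_f: "t\<in>{1,2,3} \<Longrightarrow> coord t (f 1, f 2, f (3::nat)) = f t"
  by (auto simp: coord_def)

lemma mk3_coord: assumes "{i,j,k} = {1::nat,2,3}"
  shows "coord i (mk3 i j k a b c) = a" "coord j (mk3 i j k a b c) = b" "coord k (mk3 i j k a b c) = c"
  using perm3[OF assms] coord_f[of i "\<lambda>t. if t = i then a else if t = j then b else c"]
    coord_f[of j "\<lambda>t. if t = i then a else if t = j then b else c"]
    coord_f[of k "\<lambda>t. if t = i then a else if t = j then b else c"]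
  by (auto simp: mk3_def Let_def)

lemma ball3: assumes "{i,j,k} = {1::nat,2,3}"
  shows "(\<forall>t\<in>{1,2,3}. P t) \<longleftrightarrow> P i \<and> P j \<and> P k" "(\<exists>t\<in>{1,2,3}. P t) \<longleftrightarrow> P i \<or> P j \<or> P k"
  by (simp_all only: assms[symmetric]) auto

definition shr :: "vtx \<Rightarrow> vtx \<Rightarrow> bool" where
  "shr x w \<longleftrightarrow> (\<exists>t\<in>{1,2,3}. coord t x = coord t w)"

lemma Kadj_shr: "Kadj x w \<longleftrightarrow> \<not> shr x w"
  by (auto simp: Kadj_def shr_def)

lemma walk0D: "walk V adj 0 x z \<Longrightarrow> x = z"
  by (erule walk.cases) auto

lemma walk1D: "walk V adj (Suc 0) x z \<Longrightarrow> adj x z"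
  by (erule walk.cases) (auto dest: walk0D)

lemma gdist_eqI:
  assumes "walk V adj m x z" and "\<And>k. walk V adj k x z \<Longrightarrow> m \<le> k"
  shows "gdist V adj x z = enat m"
  unfolding gdist_def
proof (rule antisym)
  show "Inf {enat k |k. walk V adj k x z} \<le> enat m" using assms(1) by (auto intro: Inf_lower)
  show "enat m \<le> Inf {enat k |k. walk V adj k x z}" using assms(2) by (auto intro!: Inf_greatest)
qed

lemma third_val: "3 \<le> (m::nat) \<Longrightarrow> \<exists>c. 1 \<le> c \<and> c \<le> m \<and> c \<noteq> a \<and> c \<noteq> b"
proof -
  assume "3 \<le> m"
  have "\<exists>c\<in>{1,2,3::nat}. c \<noteq> a \<and> c \<noteq> b" by auto
  then obtain c where "c\<in>{1,2,3::nat}" "c \<noteq> a" "c \<noteq> b" by blast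
  then show ?thesis using \<open>3 \<le> m\<close> by (intro exI[of _ c]) auto
qed

lemma common_nb:
  assumes "x \<in> Kverts m1 m2 m3" "y \<in> Kverts m1 m2 m3" "3 \<le> m1" "3 \<le> m2" "3 \<le> m3"
  shows "\<exists>z\<in>Kverts m1 m2 m3. Kadj x z \<and> Kadj z y"
proof -
  obtain c1 where c1: "1 \<le> c1" "c1 \<le> m1" "c1 \<noteq> coord 1 x" "c1 \<noteq> coord 1 y" using third_val assms by blast
  obtain c2 where c2: "1 \<le> c2" "c2 \<le> m2" "c2 \<noteq> coord 2 x" "c2 \<noteq> coord 2 y" using third_val assms by blast
  obtain c3 where c3: "1 \<le> c3" "c3 \<le> m3" "c3 \<noteq> coord 3 x" "c3 \<noteq> coord 3 y" using third_val assms by blast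
  show ?thesis
    by (rule bexI[of _ "(c1,c2,c3)"]) (use c1 c2 c3 in \<open>auto simp: Kadj_def Kverts_def\<close>)
qed

lemma gdist_K:
  assumes "x \<in> Kverts m1 m2 m3" "y \<in> Kverts m1 m2 m3" "3 \<le> m1" "3 \<le> m2" "3 \<le> m3" "x \<noteq> y"
  shows "gdist (Kverts m1 m2 m3) Kadj x y = (if Kadj x y then 1 else 2)"
proof (cases "Kadj x y")
  case True
  have "walk (Kverts m1 m2 m3) Kadj 1 x y"
    using True assms by (auto intro!: walk.intros)
  moreover have "1 \<le> k" if "walk (Kverts m1 m2 m3) Kadj k x y" for k
    using that assms(6) by (cases k) (auto dest: walk0D)
  ultimately have "gdist (Kverts m1 m2 m3) Kadj x y = enat 1" by (rule gdist_eqI)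
  then show ?thesis using True by (simp add: one_enat_def)
next
  case False
  obtain z where z: "z \<in> Kverts m1 m2 m3" "Kadj x z" "Kadj z y" using common_nb assms by blast
  have "walk (Kverts m1 m2 m3) Kadj 2 x y"
    using z assms by (auto simp: numeral_2_eq_2 intro!: walk.intros)
  moreover have "2 \<le> k" if "walk (Kverts m1 m2 m3) Kadj k x y" for k
    using that assms(6) False by (cases k; cases "k - 1") (auto dest: walk0D walk1D)
  ultimately have "gdist (Kverts m1 m2 m3) Kadj x y = enat 2" by (rule gdist_eqI)
  then show ?thesis using False by (simp add: numeral_eq_enat)
qed




declare split_paired_All[simp del] split_paired_Ex[simp del]

context
  fixes n1 n2 n3 :: nat and W :: "vtx set"
  assumes BL: "basic_landmark n1 n2 n3 W"
begin

lemma WK: "w \<in> W \<Longrightarrow> t\<in>{1,2,3} \<Longrightarrow> 1 \<le> coord t w \<and> coord t w \<le> coord t (n1,n2,n3)"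
proof -
  assume "w \<in> W" "t\<in>{1,2,3}"
  moreover have "W \<subseteq> Kverts n1 n2 n3" using BL unfolding basic_landmark_def by (rule conjunct1)
  ultimately have "w \<in> Kverts n1 n2 n3" by blast
  then have "\<forall>t\<in>{1,2,3}. 1 \<le> coord t w \<and> coord t w \<le> coord t (n1,n2,n3)" unfolding Kverts_iff .
  then show ?thesis using \<open>t\<in>{1,2,3}\<close> by (rule bspec)
qed

lemma finW: "finite W"
proof -
  have "Kverts n1 n2 n3 \<subseteq> {..n1} \<times> {..n2} \<times> {..n3}"
    unfolding Kverts_def by (intro subsetI) (clarsimp)
  then have "finite (Kverts n1 n2 n3)" by (rule finite_subset) simp
  moreover have "W \<subseteq> Kverts n1 n2 n3" using BL unfolding basic_landmark_def by (rule conjunct1)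
  ultimately show ?thesis by (rule finite_subset[rotated])
qed
lemma BL2: "i\<in>{1,2,3} \<Longrightarrow> 1 \<le> a \<Longrightarrow> a \<le> coord i (n1, n2, n3) \<Longrightarrow> card (Wset W i a) \<ge> 2"
proof -
  have "\<forall>i\<in>{1,2,3}. \<forall>a. 1 \<le> a \<and> a \<le> coord i (n1, n2, n3) \<longrightarrow> card (Wset W i a) \<ge> 2"
    using BL unfolding basic_landmark_def by (elim conjE)
  then show "i\<in>{1,2,3} \<Longrightarrow> 1 \<le> a \<Longrightarrow> a \<le> coord i (n1, n2, n3) \<Longrightarrow> card (Wset W i a) \<ge> 2" by blast
qed

lemma BL3: "i\<in>{1,2,3} \<Longrightarrow> j\<in>{1,2,3} \<Longrightarrow> i \<noteq> j \<Longrightarrow> card (Wset W i a \<inter> Wset W j b) \<le> 1"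
proof -
  have "\<forall>i\<in>{1,2,3}. \<forall>j\<in>{1,2,3}. \<forall>a b. i \<noteq> j \<longrightarrow> card (Wset W i a \<inter> Wset W j b) \<le> 1"
    using BL unfolding basic_landmark_def by (elim conjE)
  then show "i\<in>{1,2,3} \<Longrightarrow> j\<in>{1,2,3} \<Longrightarrow> i \<noteq> j \<Longrightarrow> card (Wset W i a \<inter> Wset W j b) \<le> 1" by blast
qed

lemma uniq:
  assumes "i\<in>{1,2,3}" "j\<in>{1,2,3}" "i\<noteq>j" "p\<in>W" "q\<in>W"
    "coord i p = coord i q" "coord j p = coord j q"
  shows "p = q"
proof -
  have c: "card (Wset W i (coord i p) \<inter> Wset W j (coord j p)) \<le> 1"
    using BL3 assms(1-3) by simp
  have f: "finite (Wset W i (coord i p) \<inter> Wset W j (coord j p))"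
    using finW by (auto simp: Wset_def)
  have "p \<in> Wset W i (coord i p) \<inter> Wset W j (coord j p)" "q \<in> Wset W i (coord i p) \<inter> Wset W j (coord j p)"
    using assms by (auto simp: Wset_def)
  then show ?thesis using c card_le_Suc0_iff_eq[OF f] by auto
qed

lemma two_elems:
  assumes "c\<in>{1,2,3}" "1 \<le> a" "a \<le> coord c (n1,n2,n3)"
  shows "\<exists>p q. p\<in>W \<and> q\<in>W \<and> coord c p = a \<and> coord c q = a \<and> p\<noteq>q"
proof -
  have c: "card (Wset W c a) \<ge> 2" using BL2 assms by simp
  have f: "finite (Wset W c a)" using finW by (auto simp: Wset_def)
  have "\<not> (\<forall>p\<in>Wset W c a. \<forall>q\<in>Wset W c a. p = q)"
    using c card_le_Suc0_iff_eq[OF f] by auto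
  then show ?thesis unfolding Wset_def by blast
qed

lemma cover:
  assumes P: "{c,j,k} = {1,2,3}" and a: "1 \<le> a" "a \<le> coord c (n1,n2,n3)"
    and H: "\<forall>w\<in>W. coord c w = a \<longrightarrow> coord j w = bj \<or> coord k w = bk"
  shows "\<exists>p q. p \<noteq> q \<and> Wset W c a = {p,q} \<and> p\<in>W \<and> coord c p = a \<and> coord j p = bj
     \<and> q\<in>W \<and> coord c q = a \<and> coord k q = bk"
proof -
  note pp = perm3[OF P]
  obtain p q where pq: "p\<in>W" "q\<in>W" "coord c p = a" "coord c q = a" "p\<noteq>q"
    using two_elems[OF pp(1) a] by blast
  have uj: "r = s" if "r\<in>W" "s\<in>W" "coord c r = a" "coord c s = a" "coord j r = bj" "coord j s = bj" for r s
    by (rule uniq[of c j r s]) (use that pp in simp_all)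
  have uk: "r = s" if "r\<in>W" "s\<in>W" "coord c r = a" "coord c s = a" "coord k r = bk" "coord k s = bk" for r s
    by (rule uniq[of c k r s]) (use that pp in simp_all)
  have main: "\<exists>p q. p \<noteq> q \<and> Wset W c a = {p,q} \<and> p\<in>W \<and> coord c p = a \<and> coord j p = bj
     \<and> q\<in>W \<and> coord c q = a \<and> coord k q = bk"
    if "p\<in>W" "q\<in>W" "coord c p = a" "coord c q = a" "p\<noteq>q" "coord j p = bj" "coord k q = bk" for p q
  proof (rule exI[of _ p], rule exI[of _ q], intro conjI)
    show "Wset W c a = {p,q}"
    proof
      show "Wset W c a \<subseteq> {p,q}"
      proof
        fix r assume "r \<in> Wset W c a"
        then have r: "r\<in>W" "coord c r = a" by (auto simp: Wset_def)
        then have o: "coord j r = bj \<or> coord k r = bk" using H by blast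
        show "r \<in> {p,q}"
        proof (cases "coord j r = bj")
          case True
          then have "r = p" using uj[of r p] r that by simp
          then show ?thesis by simp
        next
          case False
          then have "coord k r = bk" using o by simp
          then have "r = q" using uk[of r q] r that by simp
          then show ?thesis by simp
        qed
      qed
      show "{p,q} \<subseteq> Wset W c a" using that by (auto simp: Wset_def)
    qed
  qed (use that in simp_all)
  have Hp: "coord j p = bj \<or> coord k p = bk" using H pq(1,3) by blast
  have Hq: "coord j q = bj \<or> coord k q = bk" using H pq(2,4) by blast
  show ?thesis
  proof (cases "coord j p = bj")
    case True
    have "coord j q \<noteq> bj"
    proof
      assume "coord j q = bj"
      then have "p = q" using uj[of p q] pq True by simp
      then show False using pq by simp
    qed
    then have "coord k q = bk" using Hq by simp
    then show ?thesis by (rule main[OF pq(1-5) True])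
  next
    case False
    then have kp: "coord k p = bk" using Hp by simp
    have "coord k q \<noteq> bk"
    proof
      assume "coord k q = bk"
      then have "p = q" using uk[of p q] pq kp by simp
      then show False using pq by simp
    qed
    then have "coord j q = bj" using Hq by simp
    then show ?thesis using main[OF pq(2,1,4,3) _ _ kp] pq(5) by simp
  qed
qed

end



lemma shr3: assumes "{i,j,k} = {1::nat,2,3}"
  shows "shr z w \<longleftrightarrow> coord i z = coord i w \<or> coord j z = coord j w \<or> coord k z = coord k w"
  unfolding shr_def ball3(2)[OF assms] by (rule refl)

lemma hypI: "i\<in>{1,2,3} \<Longrightarrow> Wset W i a = e \<Longrightarrow> e \<noteq> {} \<Longrightarrow> hyperedge W i e"
  unfolding hyperedge_def by blast

lemma commonI: "i\<in>{1,2,3} \<Longrightarrow> w\<in>W \<Longrightarrow> v\<in>W \<Longrightarrow> coord i w = a \<Longrightarrow> coord i v = a \<Longrightarrow> common W i w v"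
  unfolding common_def hyperedge_def Wset_def by blast

context
  fixes n1 n2 n3 :: nat and W :: "vtx set"
  assumes BL: "basic_landmark n1 n2 n3 W"
begin

lemma Hlem:
  assumes P: "{a,b,c} = {1,2,3}" and SW: "\<forall>w\<in>W. shr x w = shr y w" and d: "coord a x \<noteq> coord a y"
  shows "\<forall>w\<in>W. coord a w = coord a y \<longrightarrow> coord b w = coord b x \<or> coord c w = coord c x"
proof (intro ballI impI)
  fix w assume w: "w\<in>W" "coord a w = coord a y"
  then have "shr y w" by (simp add: shr3[OF P])
  then have "shr x w" using SW w by blast
  then show "coord b w = coord b x \<or> coord c w = coord c x" using d w by (auto simp: shr3[OF P])
qed

lemma core2:
  assumes P: "{l,j,k} = {1,2,3}"
    and SW: "\<forall>w\<in>W. shr x w = shr y w"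
    and dl: "coord l x \<noteq> coord l y" and dj: "coord j x \<noteq> coord j y"
    and XL: "Wset W l (coord l x) = {p,q}" and pq: "p\<noteq>q" "p\<in>W" "q\<in>W"
      "coord l p = coord l x" "coord l q = coord l x" "coord j p = coord j y" "coord k q = coord k y"
  shows "has_bad_4cycle W \<or> has_plain_hex W \<or> has_rainbow_triangle W"
proof -
  note pp = perm3[OF P]
  have P2: "{j,l,k} = {1,2,3}" "{k,l,j} = {1,2,3}" "{j,k,l} = {1,2,3}" using P by (auto simp: insert_commute)
  have sh: "shr z w \<longleftrightarrow> coord l z = coord l w \<or> coord j z = coord j w \<or> coord k z = coord k w" for z w
    by (rule shr3[OF P])
  have U: "r = s" if "a\<in>{l,j,k}" "b\<in>{l,j,k}" "a\<noteq>b" "r\<in>W" "s\<in>W" "coord a r = coord a s" "coord b r = coord b s" for a b r s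
    by (rule uniq[OF BL, of a b]) (use that P in auto)
  have bj: "1 \<le> coord j y \<and> coord j y \<le> coord j (n1,n2,n3)" using WK[OF BL pq(2) pp(2)] pq by simp
  have Hj: "\<forall>w\<in>W. coord j w = coord j y \<longrightarrow> coord l w = coord l x \<or> coord k w = coord k x"
    using Hlem[OF P2(1) SW dj] .
  obtain r s where rs: "r \<noteq> s" "Wset W j (coord j y) = {r,s}" "r\<in>W" "coord j r = coord j y"
      "coord l r = coord l x" "s\<in>W" "coord j s = coord j y" "coord k s = coord k x"
    using cover[OF BL P2(1) _ _ Hj] bj by blast
  have rp: "r = p" using U[of l j r p] rs pq pp by simp
  show ?thesis
  proof (cases "coord k x = coord k y")
    case True
    have "has_rainbow_triangle W"
      unfolding has_rainbow_triangle_def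
    proof (intro exI conjI)
      show "{l,j,k} = {1,2,3}" by (rule P)
      show "hyperedge W l {q,p}" by (rule hypI[of _ _ "coord l x"]) (use pp XL in \<open>auto simp: insert_commute\<close>)
      show "hyperedge W j {p,s}" by (rule hypI[of _ _ "coord j y"]) (use pp rs rp in auto)
      show "common W k q s" by (rule commonI[of _ _ _ _ "coord k y"]) (use pp rs pq True in auto)
      have "q \<noteq> s"
      proof
        assume "q = s"
        then have "q = p" using U[of l j q p] pq(3,2,5,4,6) rs(7) pp by simp
        then show False using pq(1) by simp
      qed
      then show "distinct [q,p,s]" using pq rs rp by simp
    qed (use pq rs in simp_all)
    then show ?thesis by blast
  next
    case False
    have bk: "1 \<le> coord k x \<and> coord k x \<le> coord k (n1,n2,n3)" using WK[OF BL rs(6) pp(3)] rs by simp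
    have H1: "\<forall>w\<in>W. coord k w = coord k x \<longrightarrow> coord l w = coord l y \<or> coord j w = coord j y"
      using Hlem[OF P2(2), of y x] SW False by auto
    obtain c1 c2 where c: "c1 \<noteq> c2" "Wset W k (coord k x) = {c1,c2}" "c1\<in>W" "coord k c1 = coord k x"
      "coord l c1 = coord l y" "c2\<in>W" "coord k c2 = coord k x" "coord j c2 = coord j y"
      using cover[OF BL P2(2) _ _ H1] bk by blast
    have bk2: "1 \<le> coord k y \<and> coord k y \<le> coord k (n1,n2,n3)" using WK[OF BL pq(3) pp(3)] pq by simp
    have H2: "\<forall>w\<in>W. coord k w = coord k y \<longrightarrow> coord l w = coord l x \<or> coord j w = coord j x"
      using Hlem[OF P2(2), of x y] SW False by auto
    obtain t1 t2 where t: "t1 \<noteq> t2" "Wset W k (coord k y) = {t1,t2}" "t1\<in>W" "coord k t1 = coord k y"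
      "coord l t1 = coord l x" "t2\<in>W" "coord k t2 = coord k y" "coord j t2 = coord j x"
      using cover[OF BL P2(2) _ _ H2] bk2 by blast
    have bj2: "1 \<le> coord j x \<and> coord j x \<le> coord j (n1,n2,n3)" using WK[OF BL t(6) pp(2)] t by simp
    have H3: "\<forall>w\<in>W. coord j w = coord j x \<longrightarrow> coord l w = coord l y \<or> coord k w = coord k y"
      using Hlem[OF P2(1), of y x] SW dj by auto
    obtain d1 d2 where d: "d1 \<noteq> d2" "Wset W j (coord j x) = {d1,d2}" "d1\<in>W" "coord j d1 = coord j x"
      "coord l d1 = coord l y" "d2\<in>W" "coord j d2 = coord j x" "coord k d2 = coord k y"
      using cover[OF BL P2(1) _ _ H3] bj2 by blast
    have bl2: "1 \<le> coord l y \<and> coord l y \<le> coord l (n1,n2,n3)" using WK[OF BL c(3) pp(1)] c by simp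
    have H4: "\<forall>w\<in>W. coord l w = coord l y \<longrightarrow> coord j w = coord j x \<or> coord k w = coord k x"
      using Hlem[OF P, of x y] SW dl by auto
    obtain e1 e2 where e: "e1 \<noteq> e2" "Wset W l (coord l y) = {e1,e2}" "e1\<in>W" "coord l e1 = coord l y"
      "coord j e1 = coord j x" "e2\<in>W" "coord l e2 = coord l y" "coord k e2 = coord k x"
      using cover[OF BL P _ _ H4] bl2 by blast
    have i1: "c2 = s" using U[of k j c2 s] c rs pp by simp
    have i2: "e1 = d1" using U[of l j e1 d1] e d pp by simp
    have i3: "e2 = c1" using U[of l k e2 c1] e c pp by simp
    have i4: "t1 = q" using U[of l k t1 q] t pq pp by simp
    have i5: "t2 = d2" using U[of j k t2 d2] t d pp by simp
    have "has_plain_hex W"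
      unfolding has_plain_hex_def
    proof (intro exI conjI)
      show "{l,j,k} = {1,2,3}" by (rule P)
      show "hyperedge W l {q,p}" by (rule hypI[of _ _ "coord l x"]) (use pp XL in \<open>auto simp: insert_commute\<close>)
      show "hyperedge W j {p,s}" by (rule hypI[of _ _ "coord j y"]) (use pp rs rp in auto)
      show "hyperedge W k {s,c1}" by (rule hypI[of _ _ "coord k x"]) (use pp c i1 in \<open>auto simp: insert_commute\<close>)
      show "hyperedge W l {c1,d1}" by (rule hypI[of _ _ "coord l y"]) (use pp e i2 i3 in \<open>auto simp: insert_commute\<close>)
      show "hyperedge W j {d1,d2}" by (rule hypI[of _ _ "coord j x"]) (use pp d in auto)
      show "hyperedge W k {d2,q}" by (rule hypI[of _ _ "coord k y"]) (use pp t i4 i5 in \<open>auto simp: insert_commute\<close>)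
      have "p \<noteq> s" using rs rp by simp
      moreover have "c1 \<noteq> s" using c i1 by simp
      moreover have "c1 \<noteq> d1" using e i2 i3 by simp
      moreover have "d2 \<noteq> q" using t i4 i5 by simp
      moreover have "q \<noteq> s" using pq(7) rs(8) False by auto
      moreover have "q \<noteq> c1" using pq(7) c(4) False by auto
      moreover have "p \<noteq> d2" using pq(6) d(7) dj by auto
      moreover have "s \<noteq> d2" using rs(8) d(8) False by auto
      moreover have "c1 \<noteq> d2" using c(4) d(8) False by auto
      moreover have "q \<noteq> d1" using pq(5) d(5) dl by auto
      moreover have "p \<noteq> c1" using pq(4) c(5) dl by auto
      moreover have "p \<noteq> d1" using pq(4) d(5) dl by auto
      moreover have "s \<noteq> d1" using rs(7) d(4) dj by auto
      ultimately show "distinct [q,p,s,c1,d1,d2]" using pq(1) d(1) by simp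
    qed (use pq rs c d in simp_all)
    then show ?thesis by blast
  qed
qed

end



lemma shr_u: "shr x (a+1,b+1,c+1) \<longleftrightarrow> (\<exists>t\<in>{1,2,3}. coord t x = coord t (a,b,c) + 1)"
  unfolding shr_def coord_plus1 by (rule refl)

lemma other2: "l\<in>{1,2,3::nat} \<Longrightarrow> \<exists>j k. {l,j,k} = {1,2,3}"
proof -
  assume "l\<in>{1,2,3::nat}"
  then consider "l = 1" | "l = 2" | "l = 3" by blast
  then show ?thesis
  proof cases
    case 1 then show ?thesis by (intro exI[of _ 2] exI[of _ 3]) simp
  next
    case 2 then show ?thesis by (intro exI[of _ 1] exI[of _ 3]) auto
  next
    case 3 then show ?thesis by (intro exI[of _ 1] exI[of _ 2]) auto
  qed
qed

context
  fixes n1 n2 n3 :: nat and W :: "vtx set"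
  assumes BL: "basic_landmark n1 n2 n3 W"
begin

lemma core:
  assumes P: "{l,j,k} = {1,2,3}"
    and xV: "x \<in> Kverts (n1+1) (n2+1) (n3+1)" and yV: "y \<in> Kverts (n1+1) (n2+1) (n3+1)"
    and SW: "\<forall>w\<in>W. shr x w = shr y w"
    and SU: "shr x (n1+1,n2+1,n3+1) = shr y (n1+1,n2+1,n3+1)"
    and dl: "coord l x \<noteq> coord l y" and act: "coord l x \<le> coord l (n1,n2,n3)"
  shows "has_bad_4cycle W \<or> has_plain_hex W \<or> has_rainbow_triangle W"
proof -
  note pp = perm3[OF P]
  have P2: "{l,k,j} = {1,2,3}" using P by (auto simp: insert_commute)
  have xb: "1 \<le> coord t x \<and> coord t x \<le> coord t (n1,n2,n3) + 1" if "t\<in>{1,2,3}" for t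
    using xV that unfolding Kverts_iff coord_plus1 by blast
  have yb: "1 \<le> coord t y \<and> coord t y \<le> coord t (n1,n2,n3) + 1" if "t\<in>{1,2,3}" for t
    using yV that unfolding Kverts_iff coord_plus1 by blast
  have H: "\<forall>w\<in>W. coord l w = coord l x \<longrightarrow> coord j w = coord j y \<or> coord k w = coord k y"
    using Hlem[OF BL P, of y x] SW dl by auto
  obtain p q where pq: "p \<noteq> q" "Wset W l (coord l x) = {p,q}" "p\<in>W" "coord l p = coord l x"
      "coord j p = coord j y" "q\<in>W" "coord l q = coord l x" "coord k q = coord k y"
    using cover[OF BL P _ _ H] xb[OF pp(1)] act by blast
  have yjb: "coord j y \<le> coord j (n1,n2,n3)" using WK[OF BL pq(3) pp(2)] pq by simp
  have ykb: "coord k y \<le> coord k (n1,n2,n3)" using WK[OF BL pq(6) pp(3)] pq by simp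
  consider "coord j x = coord j y \<and> coord k x = coord k y" | "coord j x \<noteq> coord j y" | "coord k x \<noteq> coord k y"
    by blast
  then show ?thesis
  proof cases
    case 1
    have yl: "coord l y \<le> coord l (n1,n2,n3)"
    proof (rule ccontr)
      assume "\<not> ?thesis"
      then have "coord l y = coord l (n1,n2,n3) + 1" using yb[OF pp(1)] by simp
      then have "shr y (n1+1,n2+1,n3+1)" unfolding shr_u using pp by blast
      then have "shr x (n1+1,n2+1,n3+1)" using SU by simp
      then show False unfolding shr_u ball3(2)[OF P] using act 1 yjb ykb by auto
    qed
    have H2: "\<forall>w\<in>W. coord l w = coord l y \<longrightarrow> coord j w = coord j x \<or> coord k w = coord k x"
      using Hlem[OF BL P, of x y] SW dl by auto
    obtain p' q' where pq': "p' \<noteq> q'" "Wset W l (coord l y) = {p',q'}" "p'\<in>W" "coord l p' = coord l y"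
      "coord j p' = coord j x" "q'\<in>W" "coord l q' = coord l y" "coord k q' = coord k x"
      using cover[OF BL P _ _ H2] yb[OF pp(1)] yl by blast
    have "has_bad_4cycle W"
      unfolding has_bad_4cycle_def
    proof (intro exI conjI)
      show "{l,j,k} = {1,2,3}" by (rule P)
      show "hyperedge W l {q,p}" by (rule hypI[of _ _ "coord l x"]) (use pp pq in \<open>auto simp: insert_commute\<close>)
      show "hyperedge W l {p',q'}" by (rule hypI[of _ _ "coord l y"]) (use pp pq' in auto)
      show "common W j p p'" by (rule commonI[of _ _ _ _ "coord j y"]) (use pp pq pq' 1 in auto)
      show "common W k q' q" by (rule commonI[of _ _ _ _ "coord k y"]) (use pp pq pq' 1 in auto)
      have "q \<noteq> p'" "q \<noteq> q'" "p \<noteq> p'" "p \<noteq> q'" using pq pq' dl by metis+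
      then show "distinct [q,p,p',q']" using pq(1) pq'(1) by simp
    qed (use pq pq' in simp_all)
    then show ?thesis by blast
  next
    case 2
    show ?thesis by (rule core2[OF BL P SW dl 2 pq(2,1,3,6,4,7,5,8)])
  next
    case 3
    have X: "Wset W l (coord l x) = {q,p}" using pq(2) by (simp add: insert_commute)
    have qp: "q \<noteq> p" using pq(1) by simp
    show ?thesis by (rule core2[OF BL P2 SW dl 3 X qp pq(6,3,7,4,8,5)])
  qed
qed

lemma nonres_config:
  assumes xV: "x \<in> Kverts (n1+1) (n2+1) (n3+1)" and yV: "y \<in> Kverts (n1+1) (n2+1) (n3+1)"
    and xy: "x \<noteq> y"
    and SW: "\<forall>w\<in>W. shr x w = shr y w"
    and SU: "shr x (n1+1,n2+1,n3+1) = shr y (n1+1,n2+1,n3+1)"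
  shows "has_bad_4cycle W \<or> has_plain_hex W \<or> has_rainbow_triangle W"
proof -
  obtain l where l: "l\<in>{1,2,3}" "coord l x \<noteq> coord l y" using xy vext by blast
  obtain j k where P: "{l,j,k} = {1,2,3}" using other2[OF l(1)] by blast
  have xb: "coord l x \<le> coord l (n1,n2,n3) + 1" "coord l y \<le> coord l (n1,n2,n3) + 1"
    using xV yV l(1) unfolding Kverts_iff coord_plus1 by blast+
  show ?thesis
  proof (cases "coord l x \<le> coord l (n1,n2,n3)")
    case True
    show ?thesis by (rule core[OF P xV yV SW SU l(2) True])
  next
    case False
    then have "coord l y \<le> coord l (n1,n2,n3)" using xb l(2) by simp
    moreover have "\<forall>w\<in>W. shr y w = shr x w" using SW by simp
    moreover have "coord l y \<noteq> coord l x" using l(2) by simp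
    ultimately show ?thesis using core[OF P yV xV _ SU[symmetric]] by blast
  qed
qed

end



lemma mk3_V_iff: assumes P: "{i,j,k} = {1,2,3}"
  shows "mk3 i j k a b c \<in> Kverts m1 m2 m3 \<longleftrightarrow>
    (1 \<le> a \<and> a \<le> coord i (m1,m2,m3)) \<and> (1 \<le> b \<and> b \<le> coord j (m1,m2,m3)) \<and> (1 \<le> c \<and> c \<le> coord k (m1,m2,m3))"
  unfolding Kverts_iff ball3(1)[OF P] mk3_coord[OF P] by (rule refl)

lemma not_u: "t\<in>{1,2,3} \<Longrightarrow> coord t z \<le> coord t (a,b,c) \<Longrightarrow> z \<noteq> (a+1,b+1,c+1)"
  using coord_plus1[of t a b c] by auto

lemma hypD: assumes "hyperedge W i {p,q}"
  shows "i\<in>{1,2,3}" "p\<in>W" "q\<in>W" "coord i q = coord i p" "\<And>w. w\<in>W \<Longrightarrow> coord i w = coord i p \<longleftrightarrow> w = p \<or> w = q"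
proof -
  obtain a where a: "{p,q} = Wset W i a" and i: "i\<in>{1,2,3}" using assms unfolding hyperedge_def by blast
  have pa: "p \<in> Wset W i a" "q \<in> Wset W i a" using a by blast+
  then show "i\<in>{1,2,3}" "p\<in>W" "q\<in>W" "coord i q = coord i p" using i by (auto simp: Wset_def)
  show "coord i w = coord i p \<longleftrightarrow> w = p \<or> w = q" if "w\<in>W" for w
  proof -
    have "coord i p = a" using pa by (simp add: Wset_def)
    then have "coord i w = coord i p \<longleftrightarrow> w \<in> Wset W i a" using that by (simp add: Wset_def)
    also have "\<dots> \<longleftrightarrow> w = p \<or> w = q" unfolding a[symmetric] by simp
    finally show ?thesis .
  qed
qed

lemma commonD: assumes "common W i p q" shows "p\<in>W" "q\<in>W" "coord i q = coord i p"
proof -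
  obtain e where "hyperedge W i e" "p\<in>e" "q\<in>e" using assms unfolding common_def by blast
  then obtain a where "p \<in> Wset W i a" "q \<in> Wset W i a" unfolding hyperedge_def by blast
  then show "p\<in>W" "q\<in>W" "coord i q = coord i p" by (simp_all add: Wset_def)
qed

context
  fixes n1 n2 n3 :: nat and W :: "vtx set"
  assumes BL: "basic_landmark n1 n2 n3 W"
begin

lemma Wle: "z\<in>W \<Longrightarrow> t\<in>{1,2,3} \<Longrightarrow> 1 \<le> coord t z \<and> coord t z \<le> coord t (n1,n2,n3) + 1"
  using WK[OF BL] by fastforce

lemma Wle': "z\<in>W \<Longrightarrow> t\<in>{1,2,3} \<Longrightarrow> coord t z \<le> coord t (n1,n2,n3)"
  using WK[OF BL] by blast

lemma wit_bad:
  assumes "has_bad_4cycle W"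
  shows "\<exists>x y. x \<in> Kverts (n1+1) (n2+1) (n3+1) \<and> y \<in> Kverts (n1+1) (n2+1) (n3+1) \<and>
    x \<notin> insert (n1+1,n2+1,n3+1) W \<and> y \<notin> insert (n1+1,n2+1,n3+1) W \<and> x \<noteq> y \<and>
    (\<forall>w\<in>insert (n1+1,n2+1,n3+1) W. shr x w = shr y w)"
proof -
  obtain w1 w2 w3 w4 i j k where
    ws: "w1 \<in> W" "w2 \<in> W" "w3 \<in> W" "w4 \<in> W" "distinct [w1, w2, w3, w4]"
    and P: "{i, j, k} = {1, 2, 3}"
    and h1: "hyperedge W i {w1, w2}" and h2: "hyperedge W i {w3, w4}"
    and c1: "common W j w2 w3" and c2: "common W k w4 w1"
    using assms unfolding has_bad_4cycle_def by blast
  note pp = perm3[OF P]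
  note H1 = hypD[OF h1] and H2 = hypD[OF h2] and C1 = commonD[OF c1] and C2 = commonD[OF c2]
  define x where "x = mk3 i j k (coord i w1) (coord j w2) (coord k w1)"
  define y where "y = mk3 i j k (coord i w3) (coord j w2) (coord k w1)"
  note cx = mk3_coord[OF P, of "coord i w1" "coord j w2" "coord k w1", folded x_def]
  note cy = mk3_coord[OF P, of "coord i w3" "coord j w2" "coord k w1", folded y_def]
  have xV: "x \<in> Kverts (n1+1) (n2+1) (n3+1)" unfolding x_def mk3_V_iff[OF P] coord_plus1
    using Wle[OF ws(1) pp(1)] Wle[OF ws(2) pp(2)] Wle[OF ws(1) pp(3)] by simp
  have yV: "y \<in> Kverts (n1+1) (n2+1) (n3+1)" unfolding y_def mk3_V_iff[OF P] coord_plus1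
    using Wle[OF ws(3) pp(1)] Wle[OF ws(2) pp(2)] Wle[OF ws(1) pp(3)] by simp
  have xu: "x \<noteq> (n1+1,n2+1,n3+1)" by (rule not_u[OF pp(1)]) (use cx Wle'[OF ws(1) pp(1)] in simp)
  have yu: "y \<noteq> (n1+1,n2+1,n3+1)" by (rule not_u[OF pp(1)]) (use cy Wle'[OF ws(3) pp(1)] in simp)
  have dist: "w1 \<noteq> w2" "w1 \<noteq> w3" "w1 \<noteq> w4" "w2 \<noteq> w3" "w2 \<noteq> w4" "w3 \<noteq> w4" using ws(5) by auto
  have a_ne: "coord i w3 \<noteq> coord i w1"
  proof
    assume "coord i w3 = coord i w1"
    then have "w3 = w1 \<or> w3 = w2" using H1(5)[OF ws(3)] by simp
    then show False using dist by auto
  qed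
  have xW: "x \<notin> W"
  proof
    assume xW: "x \<in> W"
    then have "x = w1 \<or> x = w2" using H1(5)[OF xW] cx by simp
    then show False
    proof
      assume "x = w1"
      then have "w1 = w2" using uniq[OF BL pp(1,2,4) ws(1,2)] cx H1(4) by simp
      then show False using dist by simp
    next
      assume "x = w2"
      then have "w1 = w2" using uniq[OF BL pp(1,3,5) ws(1,2)] cx H1(4) by simp
      then show False using dist by simp
    qed
  qed
  have yW: "y \<notin> W"
  proof
    assume yW: "y \<in> W"
    have "coord i y = coord i w3" using cy by simp
    then have "y = w3 \<or> y = w4" using H2(5)[OF yW] by simp
    then show False
    proof
      assume "y = w3"
      then have "w3 = w4" using uniq[OF BL pp(1,3,5) ws(3,4)] cy H2(4) C2(3) by simp
      then show False using dist by simp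
    next
      assume "y = w4"
      then have "w3 = w4" using uniq[OF BL pp(1,2,4) ws(3,4)] cy H2(4) C1(3) by simp
      then show False using dist by simp
    qed
  qed
  have xy: "x \<noteq> y" using cx cy a_ne by metis
  have sx: "shr x w \<longleftrightarrow> coord j w = coord j w2 \<or> coord k w = coord k w1" if "w\<in>W" for w
  proof -
    have "shr x w \<longleftrightarrow> coord i w1 = coord i w \<or> coord j w2 = coord j w \<or> coord k w1 = coord k w"
      unfolding shr3[OF P] cx by (rule refl)
    also have "\<dots> \<longleftrightarrow> coord j w = coord j w2 \<or> coord k w = coord k w1"
      using H1(5)[OF that] by auto
    finally show ?thesis .
  qed
  have sy: "shr y w \<longleftrightarrow> coord j w = coord j w2 \<or> coord k w = coord k w1" if "w\<in>W" for w
  proof -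
    have "shr y w \<longleftrightarrow> coord i w3 = coord i w \<or> coord j w2 = coord j w \<or> coord k w1 = coord k w"
      unfolding shr3[OF P] cy by (rule refl)
    also have "\<dots> \<longleftrightarrow> coord j w = coord j w2 \<or> coord k w = coord k w1"
      using H2(5)[OF that] C1(3) C2(3) by auto
    finally show ?thesis .
  qed
  have su: "\<not> shr x (n1+1,n2+1,n3+1)" "\<not> shr y (n1+1,n2+1,n3+1)"
    unfolding shr_u ball3(2)[OF P] cx cy
    using Wle'[OF ws(1) pp(1)] Wle'[OF ws(2) pp(2)] Wle'[OF ws(1) pp(3)] Wle'[OF ws(3) pp(1)] by auto
  show ?thesis
    by (rule exI[of _ x], rule exI[of _ y]) (use xV yV xu yu xW yW xy sx sy su in auto)
qed

end



context
  fixes n1 n2 n3 :: nat and W :: "vtx set"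
  assumes BL: "basic_landmark n1 n2 n3 W"
begin

lemma wit_hex:
  assumes "has_plain_hex W"
  shows "\<exists>x y. x \<in> Kverts (n1+1) (n2+1) (n3+1) \<and> y \<in> Kverts (n1+1) (n2+1) (n3+1) \<and>
    x \<notin> insert (n1+1,n2+1,n3+1) W \<and> y \<notin> insert (n1+1,n2+1,n3+1) W \<and> x \<noteq> y \<and>
    (\<forall>w\<in>insert (n1+1,n2+1,n3+1) W. shr x w = shr y w)"
proof -
  obtain w1 w2 w3 w4 w5 w6 i j k where
    ws: "w1 \<in> W" "w2 \<in> W" "w3 \<in> W" "w4 \<in> W" "w5 \<in> W" "w6 \<in> W" "distinct [w1, w2, w3, w4, w5, w6]"
    and P: "{i, j, k} = {1, 2, 3}"
    and h12: "hyperedge W i {w1, w2}" and h45: "hyperedge W i {w4, w5}"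
    and h23: "hyperedge W j {w2, w3}" and h56: "hyperedge W j {w5, w6}"
    and h34: "hyperedge W k {w3, w4}" and h61: "hyperedge W k {w6, w1}"
    using assms unfolding has_plain_hex_def by blast
  note pp = perm3[OF P]
  note H12 = hypD[OF h12] and H45 = hypD[OF h45] and H23 = hypD[OF h23]
    and H56 = hypD[OF h56] and H34 = hypD[OF h34] and H61 = hypD[OF h61]
  define x where "x = mk3 i j k (coord i w1) (coord j w5) (coord k w3)"
  define y where "y = mk3 i j k (coord i w4) (coord j w2) (coord k w6)"
  note cx = mk3_coord[OF P, of "coord i w1" "coord j w5" "coord k w3", folded x_def]
  note cy = mk3_coord[OF P, of "coord i w4" "coord j w2" "coord k w6", folded y_def]
  have xV: "x \<in> Kverts (n1+1) (n2+1) (n3+1)" unfolding x_def mk3_V_iff[OF P] coord_plus1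
    using Wle[OF BL ws(1) pp(1)] Wle[OF BL ws(5) pp(2)] Wle[OF BL ws(3) pp(3)] by simp
  have yV: "y \<in> Kverts (n1+1) (n2+1) (n3+1)" unfolding y_def mk3_V_iff[OF P] coord_plus1
    using Wle[OF BL ws(4) pp(1)] Wle[OF BL ws(2) pp(2)] Wle[OF BL ws(6) pp(3)] by simp
  have xu: "x \<noteq> (n1+1,n2+1,n3+1)" by (rule not_u[OF pp(1)]) (use cx Wle'[OF BL ws(1) pp(1)] in simp)
  have yu: "y \<noteq> (n1+1,n2+1,n3+1)" by (rule not_u[OF pp(1)]) (use cy Wle'[OF BL ws(4) pp(1)] in simp)
  have dist: "w1 \<noteq> w3" "w1 \<noteq> w4" "w2 \<noteq> w3" "w2 \<noteq> w4" "w4 \<noteq> w6" "w4 \<noteq> w1" "w5 \<noteq> w6" "w5 \<noteq> w1" "w1 \<noteq> w2" "w4 \<noteq> w5"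
    using ws(7) by auto
  have xW: "x \<notin> W"
  proof
    assume xW: "x \<in> W"
    have "x = w1 \<or> x = w2" using H12(5)[OF xW] cx by simp
    moreover have "x = w3 \<or> x = w4" using H34(5)[OF xW] cx by simp
    ultimately show False using dist by auto
  qed
  have yW: "y \<notin> W"
  proof
    assume yW: "y \<in> W"
    have "y = w4 \<or> y = w5" using H45(5)[OF yW] cy by simp
    moreover have "y = w6 \<or> y = w1" using H61(5)[OF yW] cy by simp
    ultimately show False using dist by auto
  qed
  have a_ne: "coord i w4 \<noteq> coord i w1"
  proof
    assume "coord i w4 = coord i w1"
    then have "w4 = w1 \<or> w4 = w2" using H12(5)[OF ws(4)] by simp
    then show False using dist by auto
  qed
  have xy: "x \<noteq> y" using cx cy a_ne by metis
  have sx: "shr x w \<longleftrightarrow> w = w1 \<or> w = w2 \<or> w = w3 \<or> w = w4 \<or> w = w5 \<or> w = w6" if "w\<in>W" for w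
  proof -
    have "shr x w \<longleftrightarrow> coord i w = coord i w1 \<or> coord j w = coord j w5 \<or> coord k w = coord k w3"
      unfolding shr3[OF P] cx by auto
    also have "\<dots> \<longleftrightarrow> w = w1 \<or> w = w2 \<or> w = w3 \<or> w = w4 \<or> w = w5 \<or> w = w6"
      using H12(5)[OF that] H56(5)[OF that] H34(5)[OF that] H56(4) by auto
    finally show ?thesis .
  qed
  have sy: "shr y w \<longleftrightarrow> w = w1 \<or> w = w2 \<or> w = w3 \<or> w = w4 \<or> w = w5 \<or> w = w6" if "w\<in>W" for w
  proof -
    have "shr y w \<longleftrightarrow> coord i w = coord i w4 \<or> coord j w = coord j w2 \<or> coord k w = coord k w6"
      unfolding shr3[OF P] cy by auto
    also have "\<dots> \<longleftrightarrow> w = w1 \<or> w = w2 \<or> w = w3 \<or> w = w4 \<or> w = w5 \<or> w = w6"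
      using H45(5)[OF that] H23(5)[OF that] H61(5)[OF that] by auto
    finally show ?thesis .
  qed
  have su: "\<not> shr x (n1+1,n2+1,n3+1)" "\<not> shr y (n1+1,n2+1,n3+1)"
    unfolding shr_u ball3(2)[OF P] cx cy
    using Wle'[OF BL ws(1) pp(1)] Wle'[OF BL ws(5) pp(2)] Wle'[OF BL ws(3) pp(3)]
      Wle'[OF BL ws(4) pp(1)] Wle'[OF BL ws(2) pp(2)] Wle'[OF BL ws(6) pp(3)] by auto
  show ?thesis
    by (rule exI[of _ x], rule exI[of _ y]) (use xV yV xu yu xW yW xy sx sy su in auto)
qed

lemma wit_tri:
  assumes "has_rainbow_triangle W"
  shows "\<exists>x y. x \<in> Kverts (n1+1) (n2+1) (n3+1) \<and> y \<in> Kverts (n1+1) (n2+1) (n3+1) \<and>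
    x \<notin> insert (n1+1,n2+1,n3+1) W \<and> y \<notin> insert (n1+1,n2+1,n3+1) W \<and> x \<noteq> y \<and>
    (\<forall>w\<in>insert (n1+1,n2+1,n3+1) W. shr x w = shr y w)"
proof -
  obtain w1 w2 w3 i j k where
    ws: "w1 \<in> W" "w2 \<in> W" "w3 \<in> W" "distinct [w1, w2, w3]"
    and P: "{i, j, k} = {1, 2, 3}"
    and h12: "hyperedge W i {w1, w2}" and h23: "hyperedge W j {w2, w3}" and c13: "common W k w1 w3"
    using assms unfolding has_rainbow_triangle_def by blast
  note pp = perm3[OF P]
  note H12 = hypD[OF h12] and H23 = hypD[OF h23] and C = commonD[OF c13]
  define x where "x = mk3 i j k (coord i w1) (coord j (n1,n2,n3) + 1) (coord k w1)"
  define y where "y = mk3 i j k (coord i (n1,n2,n3) + 1) (coord j w2) (coord k w1)"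
  note cx = mk3_coord[OF P, of "coord i w1" "coord j (n1,n2,n3) + 1" "coord k w1", folded x_def]
  note cy = mk3_coord[OF P, of "coord i (n1,n2,n3) + 1" "coord j w2" "coord k w1", folded y_def]
  have xV: "x \<in> Kverts (n1+1) (n2+1) (n3+1)" unfolding x_def mk3_V_iff[OF P] coord_plus1
    using Wle[OF BL ws(1) pp(1)] Wle[OF BL ws(1) pp(3)] by simp
  have yV: "y \<in> Kverts (n1+1) (n2+1) (n3+1)" unfolding y_def mk3_V_iff[OF P] coord_plus1
    using Wle[OF BL ws(2) pp(2)] Wle[OF BL ws(1) pp(3)] by simp
  have xu: "x \<noteq> (n1+1,n2+1,n3+1)" by (rule not_u[OF pp(1)]) (use cx Wle'[OF BL ws(1) pp(1)] in simp)
  have yu: "y \<noteq> (n1+1,n2+1,n3+1)" by (rule not_u[OF pp(2)]) (use cy Wle'[OF BL ws(2) pp(2)] in simp)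
  have xW: "x \<notin> W"
  proof
    assume "x \<in> W"
    then have "coord j x \<le> coord j (n1,n2,n3)" by (rule Wle'[OF BL _ pp(2)])
    then show False using cx by simp
  qed
  have yW: "y \<notin> W"
  proof
    assume "y \<in> W"
    then have "coord i y \<le> coord i (n1,n2,n3)" by (rule Wle'[OF BL _ pp(1)])
    then show False using cy by simp
  qed
  have xy: "x \<noteq> y"
  proof
    assume "x = y"
    then have "coord i w1 = coord i (n1,n2,n3) + 1" using cx cy by metis
    then show False using Wle'[OF BL ws(1) pp(1)] by simp
  qed
  have sx: "shr x w \<longleftrightarrow> w = w2 \<or> coord k w = coord k w1" if "w\<in>W" for w
  proof -
    have "coord j w \<le> coord j (n1,n2,n3)" by (rule Wle'[OF BL that pp(2)])
    then have "shr x w \<longleftrightarrow> coord i w = coord i w1 \<or> coord k w = coord k w1"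
      unfolding shr3[OF P] cx by auto
    also have "\<dots> \<longleftrightarrow> w = w2 \<or> coord k w = coord k w1"
      using H12(5)[OF that] by auto
    finally show ?thesis .
  qed
  have sy: "shr y w \<longleftrightarrow> w = w2 \<or> coord k w = coord k w1" if "w\<in>W" for w
  proof -
    have "coord i w \<le> coord i (n1,n2,n3)" by (rule Wle'[OF BL that pp(1)])
    then have "shr y w \<longleftrightarrow> coord j w = coord j w2 \<or> coord k w = coord k w1"
      unfolding shr3[OF P] cy by auto
    also have "\<dots> \<longleftrightarrow> w = w2 \<or> coord k w = coord k w1"
      using H23(5)[OF that] C(3) by auto
    finally show ?thesis .
  qed
  have su: "shr x (n1+1,n2+1,n3+1)" "shr y (n1+1,n2+1,n3+1)"
    unfolding shr_u ball3(2)[OF P] cx cy by simp_all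
  show ?thesis
    by (rule exI[of _ x], rule exI[of _ y]) (use xV yV xu yu xW yW xy sx sy su in auto)
qed

end

lemma res_iff:
  assumes m: "3 \<le> m1" "3 \<le> m2" "3 \<le> m3" and sub: "W' \<subseteq> Kverts m1 m2 m3"
  shows "resolving (Kverts m1 m2 m3) Kadj W' \<longleftrightarrow>
    (\<forall>x\<in>Kverts m1 m2 m3 - W'. \<forall>y\<in>Kverts m1 m2 m3 - W'. x \<noteq> y \<longrightarrow> (\<exists>w\<in>W'. shr x w \<noteq> shr y w))"
proof -
  have g: "gdist (Kverts m1 m2 m3) Kadj x w = (if shr x w then 2 else 1)"
    if "x \<in> Kverts m1 m2 m3 - W'" "w \<in> W'" for x w
  proof -
    have "x \<noteq> w" using that by blast
    moreover have "w \<in> Kverts m1 m2 m3" using that sub by blast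
    ultimately show ?thesis using gdist_K[of x m1 m2 m3 w] that m by (simp add: Kadj_shr)
  qed
  have e: "(gdist (Kverts m1 m2 m3) Kadj x w \<noteq> gdist (Kverts m1 m2 m3) Kadj y w) \<longleftrightarrow> (shr x w \<noteq> shr y w)"
    if "x \<in> Kverts m1 m2 m3 - W'" "y \<in> Kverts m1 m2 m3 - W'" "w \<in> W'" for x y w
    using g[OF that(1,3)] g[OF that(2,3)] by simp
  show ?thesis unfolding resolving_def using sub e by blast
qed

theorem mainTheorem4:
  fixes n1 n2 n3 :: nat and W :: "vtx set"
  assumes "3 \<le> n1" and "3 \<le> n2" and "n1 \<le> n3" and "n2 \<le> n3"
    and "basic_landmark n1 n2 n3 W"
  shows "resolving (Kverts (n1 + 1) (n2 + 1) (n3 + 1)) Kadj (insert (n1 + 1, n2 + 1, n3 + 1) W)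
    \<longleftrightarrow> \<not> has_bad_4cycle W \<and> \<not> has_plain_hex W \<and> \<not> has_rainbow_triangle W"
proof -
  note BL = assms(5)
  let ?V = "Kverts (n1 + 1) (n2 + 1) (n3 + 1)"
  let ?W' = "insert (n1 + 1, n2 + 1, n3 + 1) W"
  have WK1: "W \<subseteq> Kverts n1 n2 n3" using BL unfolding basic_landmark_def by (rule conjunct1)
  have sub: "?W' \<subseteq> ?V"
  proof
    fix w assume "w \<in> ?W'"
    then show "w \<in> ?V"
    proof
      assume "w = (n1 + 1, n2 + 1, n3 + 1)"
      then show ?thesis by (simp add: Kverts_def)
    next
      assume "w \<in> W"
      then have "w \<in> Kverts n1 n2 n3" using WK1 by blast
      then show ?thesis unfolding Kverts_iff coord_plus1 by fastforce
    qed
  qed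
  have m: "3 \<le> n1 + 1" "3 \<le> n2 + 1" "3 \<le> n3 + 1" using assms by simp_all
  have R: "resolving ?V Kadj ?W' \<longleftrightarrow>
    \<not> (\<exists>x y. x \<in> ?V \<and> y \<in> ?V \<and> x \<notin> ?W' \<and> y \<notin> ?W' \<and> x \<noteq> y \<and> (\<forall>w\<in>?W'. shr x w = shr y w))"
    unfolding res_iff[OF m sub] by blast
  show ?thesis
  proof
    assume r: "resolving ?V Kadj ?W'"
    show "\<not> has_bad_4cycle W \<and> \<not> has_plain_hex W \<and> \<not> has_rainbow_triangle W"
      using r wit_bad[OF BL] wit_hex[OF BL] wit_tri[OF BL] unfolding R by blast
  next
    assume nc: "\<not> has_bad_4cycle W \<and> \<not> has_plain_hex W \<and> \<not> has_rainbow_triangle W"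
    show "resolving ?V Kadj ?W'"
      unfolding R
    proof
      assume "\<exists>x y. x \<in> ?V \<and> y \<in> ?V \<and> x \<notin> ?W' \<and> y \<notin> ?W' \<and> x \<noteq> y \<and> (\<forall>w\<in>?W'. shr x w = shr y w)"
      then obtain x y where xy: "x \<in> ?V" "y \<in> ?V" "x \<noteq> y" "\<forall>w\<in>?W'. shr x w = shr y w" by blast
      have SW: "\<forall>w\<in>W. shr x w = shr y w" using xy(4) by blast
      have SU: "shr x (n1+1,n2+1,n3+1) = shr y (n1+1,n2+1,n3+1)" using xy(4) by blast
      show False using nonres_config[OF BL xy(1,2,3) SW SU] nc by blast
    qed
  qed
qed

end
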